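(* Let $n>1$ and $m>1$ be integers and let $G$ be an $r$-regular bipartite graph of order $m$ (with $r\geq 1$). Then $\chi_{ld}(G[\overline{K_{n}}])=2$.
   Context: All graphs are finite, simple and undirected. For a graph $G=(V,E)$ of order $N$ without isolated vertices, a bijection $f\colon V\to\{1,2,\dots,N\}$ is a local distance antimagic labeling if $w(u)\neq w(v)$ for every edge $uv$, where $w(u)=\sum_{x\in N(u)}f(x)$ and $N(u)$ is the open neighborhood of $u$. $\chi_{ld}(G)$ is the minimum number of distinct weights over all local distance antimagic labelings of $G$. $\overline{K_n}$ is the edgeless graph on $n$ vertices. The lexicographic product $G[H]$ has vertex set $V(G)\times V(H)$, with $(g,h)$ adjacent to $(g',h')$ iff $gg'\in E(G)$, or $g=g'$ and $hh'\in E(H)$. *)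

theory Defs
  imports Main
begin

definition sgraph :: "'a set \<Rightarrow> 'a set set \<Rightarrow> bool" where
  "sgraph V E \<longleftrightarrow> finite V \<and>
     (\<forall>e\<in>E. \<exists>u v. u \<noteq> v \<and> u \<in> V \<and> v \<in> V \<and> e = {u, v})"

definition nbhd :: "'a set set \<Rightarrow> 'a \<Rightarrow> 'a set" where
  "nbhd E u = {v. {u, v} \<in> E}"

definition no_isolated :: "'a set \<Rightarrow> 'a set set \<Rightarrow> bool" where
  "no_isolated V E \<longleftrightarrow> (\<forall>v\<in>V. nbhd E v \<noteq> {})"

definition regular :: "'a set \<Rightarrow> 'a set set \<Rightarrow> nat \<Rightarrow> bool" where
  "regular V E r \<longleftrightarrow> (\<forall>v\<in>V. card (nbhd E v) = r)"

definition bipartite :: "'a set \<Rightarrow> 'a set set \<Rightarrow> bool" where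
  "bipartite V E \<longleftrightarrow> (\<exists>A B. A \<union> B = V \<and> A \<inter> B = {} \<and>
      (\<forall>e\<in>E. \<exists>a\<in>A. \<exists>b\<in>B. e = {a, b}))"

definition wt :: "'a set set \<Rightarrow> ('a \<Rightarrow> nat) \<Rightarrow> 'a \<Rightarrow> nat" where
  "wt E f u = (\<Sum>x\<in>nbhd E u. f x)"

definition ld_labeling :: "'a set \<Rightarrow> 'a set set \<Rightarrow> ('a \<Rightarrow> nat) \<Rightarrow> bool" where
  "ld_labeling V E f \<longleftrightarrow> bij_betw f V {1..card V} \<and>
     (\<forall>u v. {u, v} \<in> E \<longrightarrow> wt E f u \<noteq> wt E f v)"

definition chi_ld :: "'a set \<Rightarrow> 'a set set \<Rightarrow> nat" where
  "chi_ld V E = (LEAST k. \<exists>f. ld_labeling V E f \<and> card (wt E f ` V) = k)"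

definition lexV :: "'a set \<Rightarrow> 'b set \<Rightarrow> ('a \<times> 'b) set" where
  "lexV V1 V2 = V1 \<times> V2"

definition lexE :: "'a set \<Rightarrow> 'a set set \<Rightarrow> 'b set \<Rightarrow> 'b set set \<Rightarrow> ('a \<times> 'b) set set" where
  "lexE V1 E1 V2 E2 = {{(g, h), (g', h')} | g h g' h'.
      g \<in> V1 \<and> g' \<in> V1 \<and> h \<in> V2 \<and> h' \<in> V2 \<and>
      ({g, g'} \<in> E1 \<or> (g = g' \<and> {h, h'} \<in> E2))}"

definition emptyV :: "nat \<Rightarrow> nat set" where "emptyV n = {0..<n}"
definition emptyE :: "nat \<Rightarrow> nat set set" where "emptyE n = {}"

end

theory Submission
  imports Defs
begin
lemma lexE_mem:
  assumes "x \<in> lexE V E (emptyV n) (emptyE n)"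
  obtains a b a' b' where "x = {(a,b),(a',b')}" "a \<in> V" "a' \<in> V" "b < n" "b' < n" "{a,a'} \<in> E"
proof -
  obtain a b a' b' where h: "x = {(a,b),(a',b')}" "a \<in> V" "a' \<in> V" "b \<in> emptyV n" "b' \<in> emptyV n"
     "{a,a'} \<in> E \<or> (a = a' \<and> {b,b'} \<in> emptyE n)"
    using assms unfolding lexE_def mem_Collect_eq by metis
  show ?thesis using h unfolding emptyV_def emptyE_def by (intro that[of a b a' b']) auto
qed

lemma lexE_intro:
  assumes "a \<in> V" "a' \<in> V" "b < n" "b' < n" "{a,a'} \<in> E"
  shows "{(a,b),(a',b')} \<in> lexE V E (emptyV n) (emptyE n)"
  unfolding lexE_def mem_Collect_eq
  apply (rule exI[of _ a], rule exI[of _ b], rule exI[of _ a'], rule exI[of _ b'])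
  using assms unfolding emptyV_def by simp


lemma lex_edge:
  assumes "{u,v} \<in> lexE V E (emptyV n) (emptyE n)"
  shows "\<exists>g h g' h'. u=(g,h) \<and> v=(g',h') \<and> {g,g'}\<in>E \<and> g\<in>V \<and> g'\<in>V \<and> h<n \<and> h'<n"
proof -
  obtain a b a' b' where e: "{u,v} = {(a,b),(a',b')}" "a \<in> V" "a' \<in> V" "b < n" "b' < n" "{a,a'} \<in> E"
    using lexE_mem[OF assms] by blast
  from e(1) have "(u = (a,b) \<and> v = (a',b')) \<or> (u = (a',b') \<and> v = (a,b))"
    by (simp add: doubleton_eq_iff)
  then show ?thesis
  proof
    assume "u = (a,b) \<and> v = (a',b')" then show ?thesis using e
      by (intro exI[of _ a] exI[of _ b] exI[of _ a'] exI[of _ b']) simp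
  next
    assume "u = (a',b') \<and> v = (a,b)"
    moreover have "{a',a} \<in> E" using e(6) by (simp add: insert_commute)
    ultimately show ?thesis using e
      by (intro exI[of _ a'] exI[of _ b'] exI[of _ a] exI[of _ b]) simp
  qed
qed

lemma lex_nbhd:
  assumes "sgraph V E" "g \<in> V" "h < n"
  shows "nbhd (lexE V E (emptyV n) (emptyE n)) (g,h) = nbhd E g \<times> {0..<n}"
proof
  show "nbhd (lexE V E (emptyV n) (emptyE n)) (g,h) \<subseteq> nbhd E g \<times> {0..<n}"
  proof
    fix x assume "x \<in> nbhd (lexE V E (emptyV n) (emptyE n)) (g,h)"
    then have x: "{(g,h),x} \<in> lexE V E (emptyV n) (emptyE n)" unfolding nbhd_def by simp
    from lex_edge[OF x] obtain c d c' d' where "(g,h) = (c,d)" "x = (c',d')" "{c,c'} \<in> E" "d' < n"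
      by (elim exE conjE) simp
    then show "x \<in> nbhd E g \<times> {0..<n}" unfolding nbhd_def by simp
  qed
next
  show "nbhd E g \<times> {0..<n} \<subseteq> nbhd (lexE V E (emptyV n) (emptyE n)) (g,h)"
  proof
    fix x assume "x \<in> nbhd E g \<times> {0..<n}"
    then obtain g' h' where x: "x = (g',h')" "{g,g'} \<in> E" "h' < n" unfolding nbhd_def by auto
    have "\<exists>u v. u \<noteq> v \<and> u \<in> V \<and> v \<in> V \<and> {g,g'} = {u, v}"
      using assms(1) x(2) unfolding sgraph_def by (elim conjE) (erule bspec)
    then obtain u v where uv: "u \<in> V" "v \<in> V" "{g,g'} = {u, v}" by (elim exE conjE) simp
    have "g' \<in> {g,g'}" by simp
    then have "g' \<in> {u,v}" using uv(3) by simp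
    then have "g' \<in> V" using uv by blast
    then have "{(g,h),(g',h')} \<in> lexE V E (emptyV n) (emptyE n)"
      using lexE_intro[of g V g' h n h' E] assms x by simp
    then show "x \<in> nbhd (lexE V E (emptyV n) (emptyE n)) (g,h)"
      unfolding nbhd_def using x by simp
  qed
qed

lemma pair_sum:
  assumes "p \<le> (K::nat)"
  shows "(\<Sum>h\<in>{s..<s+2*t}. (if even h then p else K - p)) = t * K"
proof (induction t)
  case 0 then show ?case by simp
next
  case (Suc t)
  have "{s..<s+2*Suc t} = insert (s+2*t) (insert (s+2*t+1) {s..<s+2*t})" by auto
  then have "(\<Sum>h\<in>{s..<s+2*Suc t}. (if even h then p else K - p)) =
     (if even (s+2*t) then p else K - p) + (if even (s+2*t+1) then p else K - p) + t * K"
    using Suc by simp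
  also have "\<dots> = Suc t * K" using assms by auto
  finally show ?case .
qed

lemma bip_nb:
  assumes "sgraph V E" "A \<union> B = V" "A \<inter> B = {}" "\<forall>e\<in>E. \<exists>a\<in>A. \<exists>b\<in>B. e = {a, b}"
  shows "a \<in> A \<Longrightarrow> nbhd E a \<subseteq> B" "b \<in> B \<Longrightarrow> nbhd E b \<subseteq> A"
proof -
  show "a \<in> A \<Longrightarrow> nbhd E a \<subseteq> B"
  proof
    fix v assume a: "a \<in> A" and "v \<in> nbhd E a"
    then have "{a,v} \<in> E" unfolding nbhd_def by simp
    then obtain a' b' where ab: "a' \<in> A" "b' \<in> B" "{a,v} = {a',b'}" using assms(4) by blast
    then have "(a = a' \<and> v = b') \<or> (a = b' \<and> v = a')" by (simp add: doubleton_eq_iff)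
    moreover have "a \<noteq> b'" using a ab assms(3) by blast
    ultimately show "v \<in> B" using ab by blast
  qed
  show "b \<in> B \<Longrightarrow> nbhd E b \<subseteq> A"
  proof
    fix v assume a: "b \<in> B" and "v \<in> nbhd E b"
    then have "{b,v} \<in> E" unfolding nbhd_def by simp
    then obtain a' b' where ab: "a' \<in> A" "b' \<in> B" "{b,v} = {a',b'}" using assms(4) by blast
    then have "(b = a' \<and> v = b') \<or> (b = b' \<and> v = a')" by (simp add: doubleton_eq_iff)
    moreover have "b \<noteq> a'" using a ab assms(3) by blast
    ultimately show "v \<in> A" using ab by blast
  qed
qed

lemma bip_card:
  assumes "sgraph V E" "A \<union> B = V" "A \<inter> B = {}" "\<forall>e\<in>E. \<exists>a\<in>A. \<exists>b\<in>B. e = {a, b}"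
    "regular V E r" "r \<ge> 1"
  shows "card A = card B"
proof -
  have fV: "finite V" using assms(1) sgraph_def by auto
  have fA: "finite A" "finite B" using fV assms(2) by auto
  have nA: "\<And>a. a \<in> A \<Longrightarrow> nbhd E a \<subseteq> B" and nB: "\<And>b. b \<in> B \<Longrightarrow> nbhd E b \<subseteq> A"
    using bip_nb[OF assms(1-4)] by auto
  have "card (SIGMA a:A. nbhd E a) = (\<Sum>a\<in>A. card (nbhd E a))"
    using fA nA by (intro card_SigmaI) (auto intro: finite_subset)
  also have "\<dots> = (\<Sum>a\<in>A. r)" using assms(2,5) unfolding regular_def by (intro sum.cong) auto
  finally have 1: "card (SIGMA a:A. nbhd E a) = card A * r" by simp
  have "card (SIGMA b:B. nbhd E b) = (\<Sum>b\<in>B. card (nbhd E b))"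
    using fA nB by (intro card_SigmaI) (auto intro: finite_subset)
  also have "\<dots> = (\<Sum>a\<in>B. r)" using assms(2,5) unfolding regular_def by (intro sum.cong) auto
  finally have 2: "card (SIGMA b:B. nbhd E b) = card B * r" by simp
  have "(SIGMA b:B. nbhd E b) = prod.swap ` (SIGMA a:A. nbhd E a)"
  proof -
    have "(SIGMA b:B. nbhd E b) = {(b,a). b \<in> B \<and> a \<in> A \<and> {a,b} \<in> E}"
      using nB unfolding nbhd_def by (auto simp: insert_commute)
    moreover have "(SIGMA a:A. nbhd E a) = {(a,b). b \<in> B \<and> a \<in> A \<and> {a,b} \<in> E}"
      using nA unfolding nbhd_def by auto
    ultimately show ?thesis by auto
  qed
  then have "card (SIGMA b:B. nbhd E b) = card (SIGMA a:A. nbhd E a)"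
    by (simp add: card_image)
  then show ?thesis using 1 2 assms(6) by simp
qed

lemma sig_sum:
  fixes k n :: nat and sig :: "nat \<Rightarrow> nat \<Rightarrow> nat"
  assumes k1: "k \<ge> 1" and n1: "n > 1"
  and sig_def: "\<And>h p. sig h p = (if h = 1 then (if even n then (if p<k then k-1-p else 3*k-1-p)
        else (if p<k then 2*k-1-2*p else 4*k-2-2*p)) else if even h then p else 2*k-1-p)"
  shows "\<exists>cA cB. cA \<noteq> cB \<and> (\<forall>p<k. (\<Sum>h\<in>{0..<n}. sig h p) = cA) \<and>
          (\<forall>p. k \<le> p \<and> p < 2*k \<longrightarrow> (\<Sum>h\<in>{0..<n}. sig h p) = cB)"
proof (cases "even n")
  case True
  define t where "t = (n-2) div 2"
  have nt: "n = 2 + 2*t" using True n1 t_def by auto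
  have "\<And>p. p < 2*k \<Longrightarrow> (\<Sum>h\<in>{0..<n}. sig h p) = sig 0 p + sig 1 p + t*(2*k-1)"
  proof -
    fix p assume p: "p < 2*k"
    have "(\<Sum>h\<in>{0..<n}. sig h p) = (\<Sum>h\<in>{0..<2}. sig h p) + (\<Sum>h\<in>{2..<n}. sig h p)"
      by (rule sum.atLeastLessThan_concat[symmetric]) (use nt in auto)
    also have "{2..<n} = {2..<2+2*t}" using nt by simp
    also have "(\<Sum>h\<in>{2..<2+2*t}. sig h p) = (\<Sum>h\<in>{2..<2+2*t}. (if even h then p else (2*k-1) - p))"
      by (intro sum.cong) (auto simp: sig_def)
    also have "\<dots> = t*(2*k-1)" using p by (intro pair_sum) auto
    also have "(\<Sum>h\<in>{0..<2}. sig h p) = sig 0 p + sig 1 p" by (simp add: numeral_2_eq_2)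
    finally show "(\<Sum>h\<in>{0..<n}. sig h p) = sig 0 p + sig 1 p + t*(2*k-1)" .
  qed
  note D = this
  have c1: "k-1 + t*(2*k-1) \<noteq> 3*k-1 + t*(2*k-1)" using k1 by simp
  have c2: "\<forall>p<k. (\<Sum>h\<in>{0..<n}. sig h p) = k-1 + t*(2*k-1)"
  proof (intro allI impI)
    fix p assume "p < k"
    then show "(\<Sum>h\<in>{0..<n}. sig h p) = k-1 + t*(2*k-1)" using D[of p] True by (simp add: sig_def)
  qed
  have c3: "\<forall>p. k \<le> p \<and> p < 2*k \<longrightarrow> (\<Sum>h\<in>{0..<n}. sig h p) = 3*k-1 + t*(2*k-1)"
  proof (intro allI impI)
    fix p assume "k \<le> p \<and> p < 2*k"
    then show "(\<Sum>h\<in>{0..<n}. sig h p) = 3*k-1 + t*(2*k-1)" using D[of p] True by (simp add: sig_def)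
  qed
  show ?thesis using c1 c2 c3 by blast
next
  case False
  define t where "t = (n-3) div 2"
  have nt: "n = 3 + 2*t" using False n1 t_def by presburger
  have "\<And>p. p < 2*k \<Longrightarrow> (\<Sum>h\<in>{0..<n}. sig h p) = sig 0 p + sig 1 p + sig 2 p + t*(2*k-1)"
  proof -
    fix p assume p: "p < 2*k"
    have "(\<Sum>h\<in>{0..<n}. sig h p) = (\<Sum>h\<in>{0..<3}. sig h p) + (\<Sum>h\<in>{3..<n}. sig h p)"
      by (rule sum.atLeastLessThan_concat[symmetric]) (use nt in auto)
    also have "{3..<n} = {3..<3+2*t}" using nt by simp
    also have "(\<Sum>h\<in>{3..<3+2*t}. sig h p) = (\<Sum>h\<in>{3..<3+2*t}. (if even h then p else (2*k-1) - p))"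
      by (intro sum.cong) (auto simp: sig_def)
    also have "\<dots> = t*(2*k-1)" using p by (intro pair_sum) auto
    also have "(\<Sum>h\<in>{0..<3}. sig h p) = sig 0 p + sig 1 p + sig 2 p" by (simp add: numeral_3_eq_3 numeral_2_eq_2)
    finally show "(\<Sum>h\<in>{0..<n}. sig h p) = sig 0 p + sig 1 p + sig 2 p + t*(2*k-1)" .
  qed
  note D = this
  have c1: "2*k-1 + t*(2*k-1) \<noteq> 4*k-2 + t*(2*k-1)" using k1 by simp
  have c2: "\<forall>p<k. (\<Sum>h\<in>{0..<n}. sig h p) = 2*k-1 + t*(2*k-1)"
  proof (intro allI impI)
    fix p assume "p < k"
    then show "(\<Sum>h\<in>{0..<n}. sig h p) = 2*k-1 + t*(2*k-1)" using D[of p] False by (simp add: sig_def)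
  qed
  have c3: "\<forall>p. k \<le> p \<and> p < 2*k \<longrightarrow> (\<Sum>h\<in>{0..<n}. sig h p) = 4*k-2 + t*(2*k-1)"
  proof (intro allI impI)
    fix p assume "k \<le> p \<and> p < 2*k"
    then show "(\<Sum>h\<in>{0..<n}. sig h p) = 4*k-2 + t*(2*k-1)" using D[of p] False by (simp add: sig_def)
  qed
  show ?thesis using c1 c2 c3 by blast
qed

lemma divmod_eq: "s < (a::nat) \<Longrightarrow> s' < a \<Longrightarrow> a*h + s = a*h' + s' \<Longrightarrow> h = h' \<and> s = s'"
proof -
  assume a: "s < a" "s' < a" "a*h + s = a*h' + s'"
  have 1: "(s + h*a) div a = h" using a(1) by simp
  have 2: "(s' + h'*a) div a = h'" using a(2) by simp
  have "s + h*a = s' + h'*a" using a(3) by (simp add: algebra_simps)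
  then have "h = h'" using 1 2 by metis
  then show ?thesis using a by simp
qed

theorem mainTheorem6:
  fixes V :: "'a set" and E :: "'a set set" and n m r :: nat
  assumes "sgraph V E" and "card V = m" and "n > 1" and "m > 1" and "r \<ge> 1"
    and "regular V E r" and "bipartite V E"
  shows "chi_ld (lexV V (emptyV n)) (lexE V E (emptyV n) (emptyE n)) = 2"
proof -
  obtain A B where AB: "A \<union> B = V" "A \<inter> B = {}" "\<forall>e\<in>E. \<exists>a\<in>A. \<exists>b\<in>B. e={a,b}"
    using assms(7) unfolding bipartite_def by blast
  have fV: "finite V" using assms(1) sgraph_def by auto
  have fA: "finite A" "finite B" using fV AB(1) by auto
  have cAB: "card A = card B" using bip_card[OF assms(1) AB assms(6,5)] .
  define k where "k = card A"
  have cV: "card V = 2*k" using card_Un_disjoint[OF fA AB(2)] AB(1) cAB k_def by simp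
  have k1: "k \<ge> 1" using cV assms(2,4) by simp
  have nA: "\<And>a. a \<in> A \<Longrightarrow> nbhd E a \<subseteq> B" and nB: "\<And>b. b \<in> B \<Longrightarrow> nbhd E b \<subseteq> A"
    using bip_nb[OF assms(1) AB] by auto
  have rN: "\<And>v. v \<in> V \<Longrightarrow> card (nbhd E v) = r" using assms(6) unfolding regular_def by blast
  obtain \<alpha> where \<alpha>: "bij_betw \<alpha> A {0..<k}" using ex_bij_betw_finite_nat[OF fA(1)] k_def by auto
  obtain \<beta> where \<beta>: "bij_betw \<beta> B {0..<k}" using ex_bij_betw_finite_nat[OF fA(2)] k_def cAB by auto
  define col where "col g = (if g \<in> A then \<alpha> g else k + \<beta> g)" for g
  have colA: "\<And>g. g \<in> A \<Longrightarrow> col g < k" using \<alpha> unfolding col_def bij_betw_def by auto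
  have colB: "\<And>g. g \<in> B \<Longrightarrow> k \<le> col g \<and> col g < 2*k" using \<beta> AB(2) unfolding col_def bij_betw_def by auto
  have colV: "\<And>g. g \<in> V \<Longrightarrow> col g < 2*k"
  proof -
    fix g assume "g \<in> V"
    then have "g \<in> A \<or> g \<in> B" using AB(1) by blast
    then show "col g < 2*k" by (elim disjE) (use colA[of g] colB[of g] in auto)
  qed
  have col_inj: "inj_on col V"
  proof (rule inj_onI)
    fix x y assume xy: "x \<in> V" "y \<in> V" "col x = col y"
    show "x = y"
    proof (cases "x \<in> A")
      case True
      then have "col y < k" using colA[OF True] xy(3) by simp
      then have "y \<in> A" using xy(2) colB[of y] AB(1) by auto
      then show ?thesis using True xy \<alpha> unfolding col_def bij_betw_def inj_on_def by auto
    next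
      case False
      then have "x \<in> B" using xy AB(1) by auto
      then have "k \<le> col y" using colB[OF \<open>x \<in> B\<close>] xy(3) by simp
      then have "y \<in> B" using xy(2) colA[of y] AB(1) by auto
      then have "y \<notin> A" using AB(2) by blast
      then have "\<beta> x = \<beta> y" using False xy(3) unfolding col_def by simp
      then show ?thesis using \<open>x \<in> B\<close> \<open>y \<in> B\<close> \<beta> unfolding bij_betw_def inj_on_def by blast
    qed
  qed
  define sig where "sig (h::nat) (p::nat) = (if h = 1 then (if even n then (if p<k then k-1-p else 3*k-1-p)
        else (if p<k then 2*k-1-2*p else 4*k-2-2*p)) else if even h then p else 2*k-1-p)" for h p
  have sig_lt: "\<And>h p. p < 2*k \<Longrightarrow> sig h p < 2*k" unfolding sig_def by auto
  have sig_inj: "\<And>h p q. p < 2*k \<Longrightarrow> q < 2*k \<Longrightarrow> sig h p = sig h q \<Longrightarrow> p = q"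
    unfolding sig_def by (auto split: if_splits; presburger)
  obtain cA cB where cAB': "cA \<noteq> cB" "\<forall>p<k. (\<Sum>h\<in>{0..<n}. sig h p) = cA"
     "\<forall>p. k \<le> p \<and> p < 2*k \<longrightarrow> (\<Sum>h\<in>{0..<n}. sig h p) = cB"
    using sig_sum[OF k1 assms(3) sig_def] by blast
  define f where "f = (\<lambda>(g,h). 2*k*h + sig h (col g) + 1)"
  define V' where "V' = lexV V (emptyV n)"
  define E' where "E' = lexE V E (emptyV n) (emptyE n)"
  have V'eq: "V' = V \<times> {0..<n}" unfolding V'_def lexV_def emptyV_def by simp
  have fV': "finite V'" using V'eq fV by simp
  have cV': "card V' = 2*k*n" using V'eq cV by (simp add: card_cartesian_product)
  have f_inj: "inj_on f V'"
  proof (rule inj_onI)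
    fix x y assume xy: "x \<in> V'" "y \<in> V'" "f x = f y"
    obtain g h g' h' where x: "x = (g,h)" and y: "y = (g',h')" by (cases x, cases y) auto
    have g: "g \<in> V" "g' \<in> V" using xy x y V'eq by auto
    have "2*k*h + sig h (col g) = 2*k*h' + sig h' (col g')" using xy(3) x y f_def by simp
    then have "h = h' \<and> sig h (col g) = sig h' (col g')"
      using divmod_eq[of "sig h (col g)" "2*k" "sig h' (col g')" h h'] sig_lt colV g by auto
    then have "h = h'" "col g = col g'" using sig_inj colV g by auto
    then show "x = y" using col_inj g x y unfolding inj_on_def by blast
  qed
  have f_rng: "f ` V' \<subseteq> {1..card V'}"
  proof
    fix y assume "y \<in> f ` V'"
    then obtain g h where gh: "g \<in> V" "h < n" "y = f (g,h)" using V'eq by auto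
    have "sig h (col g) < 2*k" using sig_lt colV gh by auto
    moreover have "2*k*(h+1) \<le> 2*k*n" using gh(2) by (intro mult_le_mono) auto
    ultimately show "y \<in> {1..card V'}" using gh cV' f_def by (auto simp: algebra_simps)
  qed
  have f_bij: "bij_betw f V' {1..card V'}"
    unfolding bij_betw_def using f_inj f_rng card_subset_eq[OF _ f_rng] card_image[OF f_inj] by auto
  define C where "C = (\<Sum>h\<in>{0..<n}. 2*k*h + 1)"
  have S: "\<And>g. (\<Sum>h\<in>{0..<n}. f (g,h)) = C + (\<Sum>h\<in>{0..<n}. sig h (col g))"
  proof -
    fix g
    have "(\<Sum>h\<in>{0..<n}. f (g,h)) = (\<Sum>h\<in>{0..<n}. (2*k*h + 1) + sig h (col g))"
      unfolding f_def by (intro sum.cong) auto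
    also have "\<dots> = C + (\<Sum>h\<in>{0..<n}. sig h (col g))" unfolding C_def by (rule sum.distrib)
    finally show "(\<Sum>h\<in>{0..<n}. f (g,h)) = C + (\<Sum>h\<in>{0..<n}. sig h (col g))" .
  qed
  have SA: "\<And>g. g \<in> A \<Longrightarrow> (\<Sum>h\<in>{0..<n}. f (g,h)) = C + cA" using S colA cAB'(2) by auto
  have SB: "\<And>g. g \<in> B \<Longrightarrow> (\<Sum>h\<in>{0..<n}. f (g,h)) = C + cB" using S colB cAB'(3) by auto
  have wt_eq: "\<And>g h. g \<in> V \<Longrightarrow> h < n \<Longrightarrow> wt E' f (g,h) = (\<Sum>g'\<in>nbhd E g. \<Sum>h\<in>{0..<n}. f (g',h))"
    unfolding wt_def E'_def by (simp add: lex_nbhd[OF assms(1)] sum.cartesian_product)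
  have wtA: "\<And>g h. g \<in> A \<Longrightarrow> h < n \<Longrightarrow> wt E' f (g,h) = r * (C + cB)"
  proof -
    fix g h assume g: "g \<in> A" "h < n"
    have gV: "g \<in> V" using g(1) AB(1) by blast
    have "wt E' f (g,h) = (\<Sum>g'\<in>nbhd E g. \<Sum>h\<in>{0..<n}. f (g',h))" by (rule wt_eq[OF gV g(2)])
    also have "\<dots> = (\<Sum>g'\<in>nbhd E g. C + cB)"
    proof (rule sum.cong)
      fix x assume "x \<in> nbhd E g"
      then have "x \<in> B" using nA[OF g(1)] by blast
      then show "(\<Sum>h\<in>{0..<n}. f (x,h)) = C + cB" by (rule SB)
    qed simp
    also have "\<dots> = r * (C + cB)" using rN[OF gV] by simp
    finally show "wt E' f (g,h) = r * (C + cB)" .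
  qed
  have wtB: "\<And>g h. g \<in> B \<Longrightarrow> h < n \<Longrightarrow> wt E' f (g,h) = r * (C + cA)"
  proof -
    fix g h assume g: "g \<in> B" "h < n"
    have gV: "g \<in> V" using g(1) AB(1) by blast
    have "wt E' f (g,h) = (\<Sum>g'\<in>nbhd E g. \<Sum>h\<in>{0..<n}. f (g',h))" by (rule wt_eq[OF gV g(2)])
    also have "\<dots> = (\<Sum>g'\<in>nbhd E g. C + cA)"
    proof (rule sum.cong)
      fix x assume "x \<in> nbhd E g"
      then have "x \<in> A" using nB[OF g(1)] by blast
      then show "(\<Sum>h\<in>{0..<n}. f (x,h)) = C + cA" by (rule SA)
    qed simp
    also have "\<dots> = r * (C + cA)" using rN[OF gV] by simp
    finally show "wt E' f (g,h) = r * (C + cA)" .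
  qed
  have wne: "r * (C + cA) \<noteq> r * (C + cB)" using cAB'(1) assms(5) by simp
  have ld: "ld_labeling V' E' f"
    unfolding ld_labeling_def
  proof (intro conjI allI impI)
    show "bij_betw f V' {1..card V'}" by (rule f_bij)
  next
    fix u v assume "{u,v} \<in> E'"
    then have "\<exists>g h g' h'. u=(g,h) \<and> v=(g',h') \<and> {g,g'}\<in>E \<and> g\<in>V \<and> g'\<in>V \<and> h<n \<and> h'<n"
      unfolding E'_def by (rule lex_edge)
    then obtain g h g' h' where e: "u=(g,h)" "v=(g',h')" "{g,g'}\<in>E" "h<n" "h'<n"
      by (elim exE conjE) simp
    obtain a b where ab: "a \<in> A" "b \<in> B" "{g,g'} = {a,b}" using AB(3) e(3) by blast
    then have "(g = a \<and> g' = b) \<or> (g = b \<and> g' = a)" by (simp add: doubleton_eq_iff)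
    then show "wt E' f u \<noteq> wt E' f v"
    proof
      assume "g = a \<and> g' = b"
      then show ?thesis using e wtA[OF ab(1) e(4)] wtB[OF ab(2) e(5)] wne by simp
    next
      assume "g = b \<and> g' = a"
      then show ?thesis using e wtB[OF ab(2) e(4)] wtA[OF ab(1) e(5)] wne by simp
    qed
  qed
  obtain a0 where a0: "a0 \<in> A" using k1 k_def by fastforce
  obtain b0 where b0: "b0 \<in> B" using k1 k_def cAB by fastforce
  have n0: "0 < n" using assms(3) by simp
  have img: "wt E' f ` V' = {r * (C + cB), r * (C + cA)}"
  proof
    show "wt E' f ` V' \<subseteq> {r * (C + cB), r * (C + cA)}"
    proof
      fix y assume "y \<in> wt E' f ` V'"
      then obtain g h where gh: "g \<in> V" "h < n" "y = wt E' f (g,h)" using V'eq by auto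
      then have "g \<in> A \<or> g \<in> B" using AB(1) by blast
      then show "y \<in> {r * (C + cB), r * (C + cA)}"
      proof
        assume "g \<in> A" then show ?thesis using wtA gh by simp
      next
        assume "g \<in> B" then show ?thesis using wtB gh by simp
      qed
    qed
  next
    have "(a0,0) \<in> V'" "(b0,0) \<in> V'" using a0 b0 AB(1) V'eq n0 by auto
    moreover have "r * (C + cB) = wt E' f (a0,0)" using wtA[OF a0 n0] by simp
    moreover have "r * (C + cA) = wt E' f (b0,0)" using wtB[OF b0 n0] by simp
    ultimately show "{r * (C + cB), r * (C + cA)} \<subseteq> wt E' f ` V'" by blast
  qed
  have card2: "card (wt E' f ` V') = 2" using img wne by auto
  obtain b1 where b1: "b1 \<in> nbhd E a0"
  proof -
    have "card (nbhd E a0) = r" using rN[of a0] a0 AB(1) by blast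
    then have "nbhd E a0 \<noteq> {}" using assms(5) by auto
    then show ?thesis using that by blast
  qed
  have edge: "{(a0,0),(b1,0)} \<in> E'" and uV: "(a0,0) \<in> V'" "(b1,0) \<in> V'"
  proof -
    have "b1 \<in> V" using b1 nA a0 AB(1) by auto
    moreover have "a0 \<in> V" using a0 AB(1) by auto
    moreover have "{a0,b1} \<in> E" using b1 nbhd_def by fastforce
    ultimately show "{(a0,0),(b1,0)} \<in> E'" "(a0,0) \<in> V'" "(b1,0) \<in> V'"
      unfolding E'_def using n0 V'eq lexE_intro by auto
  qed
  have lower: "\<And>f'. ld_labeling V' E' f' \<Longrightarrow> 2 \<le> card (wt E' f' ` V')"
  proof -
    fix f' assume "ld_labeling V' E' f'"
    then have ne: "wt E' f' (a0,0) \<noteq> wt E' f' (b1,0)" using edge unfolding ld_labeling_def by blast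
    have "{wt E' f' (a0,0), wt E' f' (b1,0)} \<subseteq> wt E' f' ` V'" using uV by auto
    then have "card {wt E' f' (a0,0), wt E' f' (b1,0)} \<le> card (wt E' f' ` V')"
      using fV' by (intro card_mono) auto
    then show "2 \<le> card (wt E' f' ` V')" using ne by simp
  qed
  have "chi_ld V' E' = 2"
    unfolding chi_ld_def
  proof (rule Least_equality)
    show "\<exists>f. ld_labeling V' E' f \<and> card (wt E' f ` V') = 2" using ld card2 by blast
  next
    fix y assume "\<exists>f. ld_labeling V' E' f \<and> card (wt E' f ` V') = y"
    then show "2 \<le> y" using lower by blast
  qed
  then show ?thesis unfolding V'_def E'_def .
qed

end
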